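(* Let $\mathcal{G}$ be a non-empty class of graphs such that no graph in $\mathcal{G}$ contains $K_{\aleph_0}$, and for every $G\in\mathcal{G}$ and every vertex $v\in V(G)$ the graph $G-v$ contains a subgraph isomorphic to a graph in $\mathcal{G}$. Let $\mathcal{F}$ be the class of graphs that contain no subgraph isomorphic to a graph in $\mathcal{G}$. Then there is no universal graph for $\mathcal{F}$.
   Context: All graphs are simple and countable; $G$ contains $H$ if $H$ is isomorphic to a subgraph of $G$. A graph $U$ is universal for a class $\mathcal{F}$ if $U\in\mathcal{F}$ and $U$ contains every graph in $\mathcal{F}$. *)

theory Defs
  imports Main
begin

text \<open>A countable simple graph: vertex set a subset of nat (so at most countable),
  edge relation a symmetric irreflexive relation on the vertex set.\<close>
type_synonym cgraph = "nat set \<times> (nat \<times> nat) set"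

definition verts :: "cgraph \<Rightarrow> nat set" where "verts G = fst G"
definition edges :: "cgraph \<Rightarrow> (nat \<times> nat) set" where "edges G = snd G"

definition is_graph :: "cgraph \<Rightarrow> bool" where
  "is_graph G \<longleftrightarrow> edges G \<subseteq> verts G \<times> verts G \<and> sym (edges G) \<and> irrefl (edges G)"

definition contains :: "cgraph \<Rightarrow> cgraph \<Rightarrow> bool" where
  "contains G H \<longleftrightarrow> (\<exists>f. inj_on f (verts H) \<and> f ` verts H \<subseteq> verts G \<and>
      (\<forall>(x, y) \<in> edges H. (f x, f y) \<in> edges G))"

definition K_aleph0 :: cgraph where
  "K_aleph0 = (UNIV, {(x, y). x \<noteq> y})"

definition delete_vertex :: "cgraph \<Rightarrow> nat \<Rightarrow> cgraph" where
  "delete_vertex G v = (verts G - {v}, edges G \<inter> ((verts G - {v}) \<times> (verts G - {v})))"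

definition universal :: "cgraph \<Rightarrow> cgraph set \<Rightarrow> bool" where
  "universal U \<F> \<longleftrightarrow> U \<in> \<F> \<and> (\<forall>H \<in> \<F>. contains U H)"

end

theory Submission
  imports Defs
begin

lemma contains_trans:
  assumes "contains A B" "contains B C" shows "contains A C"
proof -
  obtain f where f: "inj_on f (verts B)" "f ` verts B \<subseteq> verts A"
    "\<forall>(x, y) \<in> edges B. (f x, f y) \<in> edges A" using assms(1) unfolding contains_def by blast
  obtain g where g: "inj_on g (verts C)" "g ` verts C \<subseteq> verts B"
    "\<forall>(x, y) \<in> edges C. (g x, g y) \<in> edges B" using assms(2) unfolding contains_def by blast
  have "inj_on (f \<circ> g) (verts C)" using f(1) g(1,2) by (simp add: comp_inj_on inj_on_subset)
  moreover have "(f \<circ> g) ` verts C \<subseteq> verts A" using f(2) g(2) by auto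
  moreover have "\<forall>(x, y) \<in> edges C. ((f \<circ> g) x, (f \<circ> g) y) \<in> edges A" using f(3) g(3) by auto
  ultimately show ?thesis unfolding contains_def by blast
qed

lemma verts_del: "verts (delete_vertex G v) = verts G - {v}"
  unfolding delete_vertex_def by (simp add: verts_def)
lemma edges_del: "edges (delete_vertex G v) = edges G \<inter> ((verts G - {v}) \<times> (verts G - {v}))"
  unfolding delete_vertex_def by (simp add: edges_def)

definition plus :: "cgraph \<Rightarrow> cgraph" where
  "plus U = (insert 0 (Suc ` verts U),
     (\<lambda>(x,y). (Suc x, Suc y)) ` edges U \<union> {(0, Suc x)|x. x \<in> verts U} \<union> {(Suc x, 0)|x. x \<in> verts U})"

lemma verts_plus: "verts (plus U) = insert 0 (Suc ` verts U)"
  by (simp add: plus_def verts_def)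
lemma edges_plus: "edges (plus U) = (\<lambda>(x,y). (Suc x, Suc y)) ` edges U \<union> {(0, Suc x)|x. x \<in> verts U} \<union> {(Suc x, 0)|x. x \<in> verts U}"
  by (simp add: plus_def edges_def)

lemma is_graph_plus: assumes "is_graph U" shows "is_graph (plus U)"
  using assms unfolding is_graph_def verts_plus edges_plus sym_def irrefl_def by auto

lemma plus_free:
  assumes "is_graph U" "\<not> (\<exists>H \<in> \<G>. contains U H)"
    and A2: "\<forall>G \<in> \<G>. is_graph G"
    and A4: "\<forall>G \<in> \<G>. \<forall>v \<in> verts G. \<exists>H \<in> \<G>. contains (delete_vertex G v) H"
  shows "\<not> (\<exists>H \<in> \<G>. contains (plus U) H)"
proof
  assume "\<exists>H \<in> \<G>. contains (plus U) H"
  then obtain H f where H: "H \<in> \<G>" and f: "inj_on f (verts H)" "f ` verts H \<subseteq> verts (plus U)"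
    "\<forall>(x, y) \<in> edges H. (f x, f y) \<in> edges (plus U)" unfolding contains_def by blast
  show False
  proof (cases "\<exists>w \<in> verts H. f w = 0")
    case False
    have "inj_on (\<lambda>n. f n - 1) (verts H)"
      unfolding inj_on_def
    proof (intro ballI impI)
      fix x y assume xy: "x \<in> verts H" "y \<in> verts H" "f x - 1 = f y - 1"
      then have "f x \<noteq> 0" "f y \<noteq> 0" using False by auto
      then have "f x = f y" using xy(3) by linarith
      then show "x = y" using f(1) xy(1,2) unfolding inj_on_def by blast
    qed
    moreover have "(\<lambda>n. f n - 1) ` verts H \<subseteq> verts U"
    proof
      fix z assume "z \<in> (\<lambda>n. f n - 1) ` verts H"
      then obtain x where x: "x \<in> verts H" "z = f x - 1" by blast
      then have "f x \<in> insert 0 (Suc ` verts U)" "f x \<noteq> 0" using f(2) False unfolding verts_plus by auto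
      then obtain p where "p \<in> verts U" "f x = Suc p" by blast
      then show "z \<in> verts U" using x by simp
    qed
    moreover have "\<forall>(x, y) \<in> edges H. (f x - 1, f y - 1) \<in> edges U"
    proof (clarify)
      fix x y assume e: "(x, y) \<in> edges H"
      have "x \<in> verts H" "y \<in> verts H" using A2 H e unfolding is_graph_def by auto
      then have nz2: "f x \<noteq> 0" "f y \<noteq> 0" using False by auto
      have "(f x, f y) \<in> edges (plus U)" using f(3) e by blast
      then have "(f x, f y) \<in> (\<lambda>(x,y). (Suc x, Suc y)) ` edges U"
        using nz2 unfolding edges_plus by blast
      then obtain p q where "(p, q) \<in> edges U" "f x = Suc p" "f y = Suc q"
        by auto
      then show "(f x - 1, f y - 1) \<in> edges U" by simp
    qed
    ultimately have "contains U H" unfolding contains_def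
      by (intro exI[of _ "\<lambda>n. f n - 1"]) (intro conjI)
    then show False using assms(2) H by blast
  next
    case True
    then obtain w where w: "w \<in> verts H" "f w = 0" by blast
    have "\<exists>H' \<in> \<G>. contains (delete_vertex H w) H'" using A4 H w(1) by blast
    then obtain H' where H': "H' \<in> \<G>" "contains (delete_vertex H w) H'" ..
    have dv: "verts (delete_vertex H w) = verts H - {w}"
      "edges (delete_vertex H w) = edges H \<inter> ((verts H - {w}) \<times> (verts H - {w}))"
      by (simp_all only: verts_del edges_del)
    have nz: "f x \<noteq> 0" if x: "x \<in> verts H - {w}" for x
    proof
      assume "f x = 0"
      then have "f x = f w" using w(2) by simp
      then have "x = w" using inj_onD[OF f(1)] x w(1) by blast
      then show False using x by blast
    qed
    have "inj_on (\<lambda>n. f n - 1) (verts H - {w})"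
      unfolding inj_on_def
    proof (intro ballI impI)
      fix x y assume xy: "x \<in> verts H - {w}" "y \<in> verts H - {w}" "f x - 1 = f y - 1"
      have "f x \<noteq> 0" "f y \<noteq> 0" using nz[OF xy(1)] nz[OF xy(2)] by simp_all
      then have "f x = f y" using xy(3) by linarith
      then show "x = y" using f(1) xy(1,2) unfolding inj_on_def by blast
    qed
    moreover have "(\<lambda>n. f n - 1) ` (verts H - {w}) \<subseteq> verts U"
    proof
      fix z assume "z \<in> (\<lambda>n. f n - 1) ` (verts H - {w})"
      then obtain x where x: "x \<in> verts H - {w}" "z = f x - 1" by blast
      have "f x \<in> insert 0 (Suc ` verts U)" using f(2) x(1) unfolding verts_plus by blast
      moreover have "f x \<noteq> 0" using nz[OF x(1)] .
      ultimately have "f x \<in> Suc ` verts U" by simp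
      then obtain p where "p \<in> verts U" "f x = Suc p" by blast
      then show "z \<in> verts U" using x by simp
    qed
    moreover have "\<forall>(x, y) \<in> edges (delete_vertex H w). (f x - 1, f y - 1) \<in> edges U"
    proof (clarify)
      fix x y assume e: "(x, y) \<in> edges (delete_vertex H w)"
      then have "x \<in> verts H - {w}" "y \<in> verts H - {w}" "(x,y) \<in> edges H" using e unfolding dv(2) by auto
      then have nz2: "f x \<noteq> 0" "f y \<noteq> 0" using nz by simp_all
      have "(f x, f y) \<in> edges (plus U)" using f(3) \<open>(x,y) \<in> edges H\<close> by blast
      then have "(f x, f y) \<in> (\<lambda>(x,y). (Suc x, Suc y)) ` edges U"
        using nz2 unfolding edges_plus by blast
      then obtain p q where "(p, q) \<in> edges U" "f x = Suc p" "f y = Suc q"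
        by auto
      then show "(f x - 1, f y - 1) \<in> edges U" by simp
    qed
    ultimately have "contains U (delete_vertex H w)" unfolding contains_def dv(1)
      by (intro exI[of _ "\<lambda>n. f n - 1"]) (intro conjI)
    then have "contains U H'" using H'(2) by (rule contains_trans)
    then show False using assms(2) H'(1) by blast
  qed
qed

theorem mainTheorem10:
  fixes \<G> :: "cgraph set"
  assumes "\<G> \<noteq> {}"
    and "\<forall>G \<in> \<G>. is_graph G"
    and "\<forall>G \<in> \<G>. \<not> contains G K_aleph0"
    and "\<forall>G \<in> \<G>. \<forall>v \<in> verts G. \<exists>H \<in> \<G>. contains (delete_vertex G v) H"
  shows "\<not> (\<exists>U. universal U {F. is_graph F \<and> \<not> (\<exists>H \<in> \<G>. contains F H)})"
proof
  assume "\<exists>U. universal U {F. is_graph F \<and> \<not> (\<exists>H \<in> \<G>. contains F H)}"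
  then obtain U where U: "universal U {F. is_graph F \<and> \<not> (\<exists>H \<in> \<G>. contains F H)}" ..
  have gU: "is_graph U" and fU: "\<not> (\<exists>H \<in> \<G>. contains U H)"
    using U unfolding universal_def by simp_all
  have univ: "\<And>F. is_graph F \<Longrightarrow> \<not> (\<exists>H \<in> \<G>. contains F H) \<Longrightarrow> contains U F"
    using U unfolding universal_def mem_Collect_eq by blast
  have "contains U (plus U)" by (rule univ[OF is_graph_plus[OF gU] plus_free[OF gU fU assms(2,4)]])
  then have "\<exists>g. inj_on g (verts (plus U)) \<and> g ` verts (plus U) \<subseteq> verts U \<and>
      (\<forall>(x, y) \<in> edges (plus U). (g x, g y) \<in> edges U)" unfolding contains_def .
  then obtain g where g0': "inj_on g (verts (plus U)) \<and> g ` verts (plus U) \<subseteq> verts U \<and>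
      (\<forall>(x, y) \<in> edges (plus U). (g x, g y) \<in> edges U)" ..
  have g: "g ` verts (plus U) \<subseteq> verts U"
    "\<forall>(x, y) \<in> edges (plus U). (g x, g y) \<in> edges U" using g0' by simp_all
  have g0: "g 0 \<in> verts U" using g(1) unfolding verts_plus by blast
  have gS: "\<And>x. x \<in> verts U \<Longrightarrow> g (Suc x) \<in> verts U" using g(1) unfolding verts_plus by blast
  have e0: "\<And>x. x \<in> verts U \<Longrightarrow> (g 0, g (Suc x)) \<in> edges U"
  proof -
    fix x assume "x \<in> verts U"
    then have "(0, Suc x) \<in> edges (plus U)" unfolding edges_plus by blast
    then show "(g 0, g (Suc x)) \<in> edges U" using g(2) by blast
  qed
  have eS: "\<And>x y. (x, y) \<in> edges U \<Longrightarrow> (g (Suc x), g (Suc y)) \<in> edges U"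
  proof -
    fix x y assume "(x, y) \<in> edges U"
    then have "(Suc x, Suc y) \<in> (\<lambda>(x,y). (Suc x, Suc y)) ` edges U" by (rule rev_image_eqI) simp
    then have "(Suc x, Suc y) \<in> edges (plus U)" unfolding edges_plus by blast
    then show "(g (Suc x), g (Suc y)) \<in> edges U" using g(2) by blast
  qed
  define a where "a n = ((\<lambda>x. g (Suc x)) ^^ n) (g 0)" for n
  have aS: "a (Suc n) = g (Suc (a n))" for n by (simp add: a_def)
  have a0: "a 0 = g 0" by (simp add: a_def)
  have aV: "a n \<in> verts U" for n
  proof (induction n)
    case 0 show ?case using a0 g0 by simp
  next
    case (Suc n) show ?case unfolding aS using gS[OF Suc] .
  qed
  have aE: "\<forall>j. i < j \<longrightarrow> (a i, a j) \<in> edges U" for i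
  proof (induction i)
    case 0
    show ?case
    proof (intro allI impI)
      fix j :: nat assume "0 < j"
      then obtain k where "j = Suc k" using gr0_implies_Suc by blast
      then show "(a 0, a j) \<in> edges U" using e0[OF aV[of k]] by (simp add: aS a0)
    qed
  next
    case (Suc i)
    show ?case
    proof (intro allI impI)
      fix j :: nat assume "Suc i < j"
      then obtain k where k: "j = Suc k" "i < k" by (metis Suc_lessE)
      then show "(a (Suc i), a j) \<in> edges U" using eS Suc k by (simp add: aS)
    qed
  qed
  have irr: "\<And>x. (x, x) \<notin> edges U" and sy: "\<And>x y. (x, y) \<in> edges U \<Longrightarrow> (y, x) \<in> edges U"
    using gU unfolding is_graph_def irrefl_def sym_def by auto
  have adj: "\<And>i j. i \<noteq> j \<Longrightarrow> (a i, a j) \<in> edges U"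
    proof -
    fix i j :: nat assume "i \<noteq> j"
    then consider "i < j" | "j < i" by linarith
    then show "(a i, a j) \<in> edges U" using aE sy by cases blast+
  qed
  obtain G0 where G0: "G0 \<in> \<G>" using assms(1) by blast
  have irr0: "\<And>x y. (x, y) \<in> edges G0 \<Longrightarrow> x \<noteq> y"
    using assms(2) G0 unfolding is_graph_def irrefl_def by auto
  have "inj_on a (verts G0)" unfolding inj_on_def
  proof (intro ballI impI)
    fix x y assume "a x = a y"
    show "x = y"
    proof (rule ccontr)
      assume "x \<noteq> y"
      then have "(a x, a y) \<in> edges U" by (rule adj)
      then show False using irr \<open>a x = a y\<close> by metis
    qed
  qed
  moreover have "a ` verts G0 \<subseteq> verts U" using aV by blast
  moreover have "\<forall>(x, y) \<in> edges G0. (a x, a y) \<in> edges U"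
  proof (clarify)
    fix x y assume "(x, y) \<in> edges G0"
    then have "x \<noteq> y" by (rule irr0)
    then show "(a x, a y) \<in> edges U" by (rule adj)
  qed
  ultimately have "contains U G0" unfolding contains_def
    by (intro exI[of _ a]) (intro conjI)
  then show False using fU G0 by blast
qed

end
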